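(* For $n\ge0$, the expected total number $E_n$ of branches (i.e. of $r$-branches summed over all $r\ge0$) in a binary tree chosen uniformly at random among binary trees with $n$ inner nodes is \[ E_n=\frac{n+1}{\binom{2n}{n}}\sum_{k=1}^{n+1}\big(2-2^{-v_2(k)}\big)\,k\bigg[\binom{2n}{n+1-k}-2\binom{2n}{n-k}+\binom{2n}{n-1-k}\bigg], \] where $v_2(k)$ is the largest $\nu$ such that $2^\nu$ divides $k$, and binomial coefficients with negative lower index are $0$.
   Context: A binary tree is either a leaf $\square$ or an inner node with an ordered pair of subtrees (left, right) which are binary trees; its size is its number of inner nodes. The register function is defined by $\mathrm{Reg}(\square)=0$, and for a tree with subtrees $t_1,t_2$: $\mathrm{Reg}(t)=\max\{\mathrm{Reg}(t_1),\mathrm{Reg}(t_2)\}$ if these differ, and $\mathrm{Reg}(t_1)+1$ otherwise. Label every node (inner node or leaf) by the register function of the subtree rooted at it. An $r$-branch is a maximal chain of nodes labeled $r$, i.e. a connected component (with respect to parent–child edges) of the set of nodes labeled $r$. A branch is an $r$-branch for some $r\ge0$. *)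

theory Defs
  imports "HOL-Computational_Algebra.Computational_Algebra"
begin

datatype bt = Leaf | Node bt bt

fun inner :: "bt \<Rightarrow> nat" where
  "inner Leaf = 0"
| "inner (Node l r) = Suc (inner l + inner r)"

fun Reg :: "bt \<Rightarrow> nat" where
  "Reg Leaf = 0"
| "Reg (Node l r) = (if Reg l \<noteq> Reg r then max (Reg l) (Reg r) else Reg l + 1)"

fun pos :: "bt \<Rightarrow> bool list set" where
  "pos Leaf = {[]}"
| "pos (Node l r) = insert [] (Cons False ` pos l \<union> Cons True ` pos r)"

fun subt :: "bt \<Rightarrow> bool list \<Rightarrow> bt" where
  "subt t [] = t"
| "subt (Node l r) (False # p) = subt l p"
| "subt (Node l r) (True # p) = subt r p"
| "subt Leaf (_ # p) = Leaf"

definition lab :: "bt \<Rightarrow> bool list \<Rightarrow> nat" where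
  "lab t p = Reg (subt t p)"

definition labelled :: "bt \<Rightarrow> nat \<Rightarrow> bool list set" where
  "labelled t r = {p \<in> pos t. lab t p = r}"

definition redge :: "bt \<Rightarrow> nat \<Rightarrow> (bool list \<times> bool list) set" where
  "redge t r = {(p, q). p \<in> labelled t r \<and> q \<in> labelled t r \<and>
                  ((\<exists>b. q = p @ [b]) \<or> (\<exists>b. p = q @ [b]))}"

definition rbranches :: "bt \<Rightarrow> nat \<Rightarrow> bool list set set" where
  "rbranches t r = labelled t r // ((redge t r)\<^sup>*)"

definition branches :: "bt \<Rightarrow> bool list set set" where
  "branches t = (\<Union>r. rbranches t r)"

definition binomz :: "nat \<Rightarrow> int \<Rightarrow> nat" where
  "binomz n k = (if k < 0 then 0 else n choose nat k)"

definition E :: "nat \<Rightarrow> real" where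
  "E n = (\<Sum>t\<in>{t. inner t = n}. real (card (branches t))) / real (card {t. inner t = n})"

end

theory Submission
  imports Defs
begin


lemma subt_append: "subt t (p @ q) = subt (subt t p) q"
proof (induction p arbitrary: t)
  case Nil then show ?case by simp
next
  case (Cons b p)
  show ?case
  proof (cases t)
    case Leaf
    then show ?thesis by (cases q; cases b; simp)
  next
    case (Node l r) then show ?thesis using Cons by (cases b) auto
  qed
qed

lemma subt_Leaf[simp]: "subt Leaf p = Leaf"
  by (cases p) auto

lemma Reg_subt_le: "Reg (subt t q) \<le> Reg t"
proof (induction t arbitrary: q)
  case Leaf then show ?case by simp
next
  case (Node l r)
  show ?case
  proof (cases q)
    case Nil then show ?thesis by simp
  next
    case (Cons b q')
    have "Reg (subt l q') \<le> Reg l" "Reg (subt r q') \<le> Reg r" using Node.IH by auto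
    then show ?thesis using Cons by (cases b) auto
  qed
qed

lemma lab_append_le: "lab t (p @ q) \<le> lab t p"
  unfolding lab_def by (simp add: subt_append Reg_subt_le)

lemma pos_prefix: "p @ q \<in> pos t \<Longrightarrow> p \<in> pos t"
proof (induction p arbitrary: t)
  case Nil then show ?case by (cases t) auto
next
  case (Cons b p)
  then show ?case by (cases t; cases b) auto
qed

lemma finite_pos: "finite (pos t)"
  by (induction t) auto

lemma Nil_pos[simp]: "[] \<in> pos t"
  by (cases t) auto

definition hdi :: "bt \<Rightarrow> bool list \<Rightarrow> nat" where
  "hdi t p = (LEAST i. lab t (take i p) = lab t p)"

definition tp :: "bt \<Rightarrow> bool list \<Rightarrow> bool list" where
  "tp t p = take (hdi t p) p"

lemma hdi_le: "hdi t p \<le> length p"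
  unfolding hdi_def by (rule Least_le) simp

lemma hdi_prop: "lab t (take (hdi t p) p) = lab t p"
  unfolding hdi_def by (rule LeastI[of _ "length p"]) simp

lemma hdi_min: "i < hdi t p \<Longrightarrow> lab t (take i p) \<noteq> lab t p"
  unfolding hdi_def by (rule not_less_Least)

lemma lab_take_mid:
  assumes "hdi t p \<le> i" shows "lab t (take i p) = lab t p"
proof -
  obtain j where i: "i = hdi t p + j" using assms le_Suc_ex by blast
  have "take i p = take (hdi t p) p @ take j (drop (hdi t p) p)" using i take_add by blast
  then have "lab t (take i p) \<le> lab t p" using lab_append_le hdi_prop by metis
  moreover have "lab t p \<le> lab t (take i p)"
    using lab_append_le[of t "take i p" "drop i p"] by simp
  ultimately show ?thesis by simp
qed

lemma hdi_snoc:
  assumes "lab t (a @ [c]) = lab t a"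
  shows "hdi t (a @ [c]) = hdi t a"
proof -
  have le: "hdi t a \<le> length a" by (rule hdi_le)
  show ?thesis unfolding hdi_def[of t "a @ [c]"]
  proof (rule Least_equality)
    show "lab t (take (hdi t a) (a @ [c])) = lab t (a @ [c])"
      using le hdi_prop[of t a] assms by simp
  next
    fix y assume "lab t (take y (a @ [c])) = lab t (a @ [c])"
    then show "hdi t a \<le> y"
      using hdi_min[of y t a] le assms by (cases "y < hdi t a") auto
  qed
qed

lemma top_snoc:
  assumes "lab t (a @ [c]) = lab t a"
  shows "tp t (a @ [c]) = tp t a"
  using hdi_snoc[OF assms] hdi_le[of t a] unfolding tp_def by simp

lemma top_rtrancl:
  assumes "(p, q) \<in> (redge t r)\<^sup>*" shows "tp t p = tp t q"
  using assms
proof (induction rule: rtrancl_induct)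
  case base then show ?case by simp
next
  case (step y z)
  then have yz: "y \<in> labelled t r" "z \<in> labelled t r" "(\<exists>b. z = y @ [b]) \<or> (\<exists>b. y = z @ [b])"
    unfolding redge_def by auto
  then have "lab t y = lab t z" unfolding labelled_def by auto
  then have "tp t y = tp t z" using yz(3) top_snoc by metis
  then show ?case using step by simp
qed

lemma top_path:
  assumes "p \<in> pos t" shows "(tp t p, p) \<in> (redge t (lab t p))\<^sup>*"
proof -
  have "\<And>j. hdi t p + j \<le> length p \<Longrightarrow> (tp t p, take (hdi t p + j) p) \<in> (redge t (lab t p))\<^sup>*"
  proof -
    fix j show "hdi t p + j \<le> length p \<Longrightarrow> (tp t p, take (hdi t p + j) p) \<in> (redge t (lab t p))\<^sup>*"
    proof (induction j)
      case 0 then show ?case by (simp add: tp_def)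
    next
      case (Suc j)
      let ?a = "take (hdi t p + j) p" and ?b = "take (hdi t p + Suc j) p"
      have b: "?b = ?a @ [p ! (hdi t p + j)]"
        using Suc.prems by (simp add: take_Suc_conv_app_nth)
      have pa: "?a \<in> pos t" "?b \<in> pos t"
        using pos_prefix[of "take _ p" "drop _ p" t] assms by (metis append_take_drop_id)+
      have la: "lab t ?a = lab t p" "lab t ?b = lab t p" by (auto intro: lab_take_mid)
      have "(?a, ?b) \<in> redge t (lab t p)"
        unfolding redge_def labelled_def using pa la b by auto
      moreover have "(tp t p, ?a) \<in> (redge t (lab t p))\<^sup>*" using Suc by simp
      ultimately show ?case by (meson rtrancl.rtrancl_into_rtrancl)
    qed
  qed
  from this[of "length p - hdi t p"] show ?thesis using hdi_le[of t p] by simp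
qed

definition heads :: "bt \<Rightarrow> bool list set" where
  "heads t = {p \<in> pos t. p = [] \<or> lab t (butlast p) \<noteq> lab t p}"

lemma top_pos: "p \<in> pos t \<Longrightarrow> tp t p \<in> pos t"
  unfolding tp_def by (metis append_take_drop_id pos_prefix)

lemma lab_top: "lab t (tp t p) = lab t p"
  unfolding tp_def by (rule hdi_prop)

lemma top_heads: assumes "p \<in> pos t" shows "tp t p \<in> heads t"
proof -
  have "lab t (butlast (tp t p)) \<noteq> lab t (tp t p)" if ne: "tp t p \<noteq> []"
  proof -
    have h0: "hdi t p > 0" using ne unfolding tp_def by (cases "hdi t p") auto
    have "butlast (tp t p) = take (hdi t p - 1) p"
      unfolding tp_def using hdi_le[of t p] by (simp add: butlast_take)
    then show ?thesis using hdi_min[of "hdi t p - 1" t p] h0 lab_top[of t p] by simp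
  qed
  then show ?thesis using top_pos[OF assms] unfolding heads_def by auto
qed

lemma heads_top: assumes "p \<in> heads t" shows "tp t p = p"
proof (rule ccontr)
  assume ne: "tp t p \<noteq> p"
  then have lt: "hdi t p < length p" unfolding tp_def using hdi_le[of t p] by (metis le_neq_implies_less take_all)
  then have "p \<noteq> []" by auto
  then have "lab t (butlast p) \<noteq> lab t p" using assms unfolding heads_def by auto
  moreover have "butlast p = take (length p - 1) p" by (simp add: butlast_conv_take)
  moreover have "lab t (take (length p - 1) p) = lab t p" using lt by (intro lab_take_mid) simp
  ultimately show False by simp
qed

definition cls :: "bt \<Rightarrow> bool list \<Rightarrow> bool list set" where
  "cls t p = (redge t (lab t p))\<^sup>* `` {p}"

lemma sym_redge: "sym (redge t r)"
  unfolding sym_def redge_def by auto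

lemma branches_eq: "branches t = cls t ` pos t"
  unfolding branches_def rbranches_def quotient_def labelled_def cls_def by auto

lemma cls_top: assumes "p \<in> pos t" shows "cls t (tp t p) = cls t p"
proof -
  let ?R = "(redge t (lab t p))\<^sup>*"
  have s: "sym ?R" by (simp add: sym_redge sym_rtrancl)
  have tp: "(tp t p, p) \<in> ?R" by (rule top_path[OF assms])
  have "?R `` {tp t p} = ?R `` {p}"
  proof
    show "?R `` {tp t p} \<subseteq> ?R `` {p}"
      using tp s by (auto dest: symD intro: rtrancl_trans)
    show "?R `` {p} \<subseteq> ?R `` {tp t p}"
      using tp by (auto intro: rtrancl_trans)
  qed
  then show ?thesis unfolding cls_def lab_top by simp
qed

lemma branches_heads: "branches t = cls t ` heads t"
proof
  show "branches t \<subseteq> cls t ` heads t"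
    unfolding branches_eq using cls_top top_heads by (metis image_subsetI imageI)
  show "cls t ` heads t \<subseteq> branches t"
    unfolding branches_eq heads_def by auto
qed

lemma inj_cls: "inj_on (cls t) (heads t)"
proof
  fix p q assume p: "p \<in> heads t" and q: "q \<in> heads t" and e: "cls t p = cls t q"
  have "p \<in> cls t p" unfolding cls_def by simp
  then have "(q, p) \<in> (redge t (lab t q))\<^sup>*" using e unfolding cls_def by simp
  then have "tp t q = tp t p" by (rule top_rtrancl)
  then show "p = q" using heads_top p q by simp
qed

lemma card_branches_heads: "card (branches t) = card (heads t)"
  using branches_heads card_image inj_cls by metis

fun eqc :: "bt \<Rightarrow> nat" where
  "eqc Leaf = 0"
| "eqc (Node l r) = eqc l + eqc r + (if Reg l = Reg r then 1 else 0)"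

lemma lab_Nil[simp]: "lab t [] = Reg t"
  unfolding lab_def by simp

lemma lab_Node_simps[simp]:
  "lab (Node l r) [] = Reg (Node l r)"
  "lab (Node l r) (False # p) = lab l p"
  "lab (Node l r) (True # p) = lab r p"
  unfolding lab_def by simp_all

lemma Nil_heads: "[] \<in> heads t"
  unfolding heads_def by simp

lemma mem_pos_Cons: "b # p \<in> pos (Node l r) \<longleftrightarrow> p \<in> pos (if b then r else l)"
  by (cases b) auto

lemma mem_heads_Cons:
  "b # p \<in> heads (Node l r) \<longleftrightarrow>
     p \<in> heads (if b then r else l) \<and> (p = [] \<longrightarrow> Reg (if b then r else l) \<noteq> Reg (Node l r))"
proof (cases "p = []")
  case True
  then show ?thesis unfolding heads_def mem_pos_Cons by (cases b) auto
next
  case False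
  then have "butlast (b # p) = b # butlast p" by simp
  then show ?thesis using False unfolding heads_def mem_pos_Cons by (cases b) auto
qed

lemma heads_Node:
  "heads (Node l r) = insert []
     (Cons False ` (heads l - (if Reg l = Reg (Node l r) then {[]} else {})) \<union>
      Cons True ` (heads r - (if Reg r = Reg (Node l r) then {[]} else {})))"
  (is "?L = ?R")
proof (rule set_eqI)
  fix x show "x \<in> ?L \<longleftrightarrow> x \<in> ?R"
  proof (cases x)
    case Nil then show ?thesis by (simp add: Nil_heads)
  next
    case (Cons b p)
    have "x \<in> ?L \<longleftrightarrow> p \<in> heads (if b then r else l) \<and> (p = [] \<longrightarrow> Reg (if b then r else l) \<noteq> Reg (Node l r))"
      using Cons mem_heads_Cons by simp
    also have "\<dots> \<longleftrightarrow> x \<in> ?R" using Cons by (cases b) auto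
    finally show ?thesis .
  qed
qed

lemma finite_heads: "finite (heads t)"
  unfolding heads_def using finite_pos by simp

lemma card_heads: "card (heads t) = 1 + inner t + eqc t"
proof (induction t)
  case Leaf
  have "heads Leaf = {[]}" unfolding heads_def by auto
  then show ?case by simp
next
  case (Node l r)
  let ?A = "heads l - (if Reg l = Reg (Node l r) then {[]} else {})"
  let ?B = "heads r - (if Reg r = Reg (Node l r) then {[]} else {})"
  have fA: "finite ?A" "finite ?B" using finite_heads by auto
  have cA: "card ?A = card (heads l) - (if Reg l = Reg (Node l r) then 1 else 0)"
    using Nil_heads finite_heads by (simp add: card_Diff_singleton)
  have cB: "card ?B = card (heads r) - (if Reg r = Reg (Node l r) then 1 else 0)"
    using Nil_heads finite_heads by (simp add: card_Diff_singleton)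
  have "card (heads (Node l r)) = Suc (card (Cons False ` ?A \<union> Cons True ` ?B))"
    unfolding heads_Node using fA by (subst card_insert_disjoint) auto
  also have "card (Cons False ` ?A \<union> Cons True ` ?B) = card (Cons False ` ?A) + card (Cons True ` ?B)"
    using fA by (intro card_Un_disjoint) auto
  also have "card (Cons False ` ?A) = card ?A" by (simp add: card_image)
  also have "card (Cons True ` ?B) = card ?B" by (simp add: card_image)
  finally show ?case using Node.IH cA cB by (auto simp: max_def)
qed

lemma card_branches: "card (branches t) = 1 + inner t + eqc t"
  using card_branches_heads card_heads by simp



definition trees :: "nat \<Rightarrow> bt set" where "trees n = {t. inner t = n}"

lemma trees_0: "trees 0 = {Leaf}"
  unfolding trees_def by (auto elim: inner.elims)

lemma trees_Suc: "trees (Suc n) = (\<lambda>(l, r). Node l r) ` (SIGMA l : (\<Union>i\<le>n. trees i). trees (n - inner l))"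
proof
  show "trees (Suc n) \<subseteq> (\<lambda>(l, r). Node l r) ` (SIGMA l : (\<Union>i\<le>n. trees i). trees (n - inner l))"
  proof
    fix t assume "t \<in> trees (Suc n)"
    then obtain l r where t: "t = Node l r" "inner l + inner r = n" unfolding trees_def
      by (cases t) auto
    then have "(l, r) \<in> (SIGMA l : (\<Union>i\<le>n. trees i). trees (n - inner l))" unfolding trees_def by auto
    then show "t \<in> (\<lambda>(l, r). Node l r) ` (SIGMA l : (\<Union>i\<le>n. trees i). trees (n - inner l))"
      using t by force
  qed
  show "(\<lambda>(l, r). Node l r) ` (SIGMA l : (\<Union>i\<le>n. trees i). trees (n - inner l)) \<subseteq> trees (Suc n)"
    unfolding trees_def by auto
qed

lemma finite_trees: "finite (trees n)"
proof (induction n rule: less_induct)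
  case (less n)
  show ?case
  proof (cases n)
    case 0 then show ?thesis by (simp add: trees_0)
  next
    case (Suc m)
    have "finite (SIGMA l : (\<Union>i\<le>m. trees i). trees (m - inner l))"
      using less Suc by (intro finite_SigmaI) auto
    then show ?thesis unfolding Suc trees_Suc by simp
  qed
qed

lemma sum_trees_Suc:
  "(\<Sum>t\<in>trees (Suc n). f t) = (\<Sum>i\<le>n. \<Sum>l\<in>trees i. \<Sum>r\<in>trees (n - i). f (Node l r))"
proof -
  let ?S = "SIGMA l : (\<Union>i\<le>n. trees i). trees (n - inner l)"
  have inj: "inj_on (\<lambda>(l, r). Node l r) ?S" by (auto simp: inj_on_def)
  have "(\<Sum>t\<in>trees (Suc n). f t) = (\<Sum>(l,r)\<in>?S. f (Node l r))"
    unfolding trees_Suc by (subst sum.reindex[OF inj]) (simp add: comp_def split_def)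
  also have "\<dots> = (\<Sum>l\<in>(\<Union>i\<le>n. trees i). \<Sum>r\<in>trees (n - inner l). f (Node l r))"
    by (rule sum.Sigma[symmetric]) (auto simp: finite_trees)
  also have "\<dots> = (\<Sum>i\<le>n. \<Sum>l\<in>trees i. \<Sum>r\<in>trees (n - inner l). f (Node l r))"
    using finite_trees by (subst sum.UNION_disjoint) (auto simp: trees_def)
  also have "\<dots> = (\<Sum>i\<le>n. \<Sum>l\<in>trees i. \<Sum>r\<in>trees (n - i). f (Node l r))"
    by (intro sum.cong refl) (auto simp: trees_def)
  finally show ?thesis .
qed

definition gf :: "(bt \<Rightarrow> real) \<Rightarrow> real fps" where
  "gf f = Abs_fps (\<lambda>n. \<Sum>t\<in>trees n. f t)"

lemma gf_nth: "gf f $ n = (\<Sum>t\<in>trees n. f t)"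
  unfolding gf_def by simp

lemma gf_0: "gf f $ 0 = f Leaf"
  unfolding gf_def by (simp add: trees_0)

lemma gf_mult_nth: "(gf f * gf g) $ n = (\<Sum>i\<le>n. (\<Sum>l\<in>trees i. f l) * (\<Sum>r\<in>trees (n - i). g r))"
  unfolding fps_mult_nth gf_nth by (simp add: atLeast0AtMost)

lemma sum_swap3:
  "(\<Sum>l\<in>L. \<Sum>r\<in>R. \<Sum>j\<in>J. a j l * b j r) = (\<Sum>j\<in>J. (\<Sum>l\<in>L. a j l) * (\<Sum>r\<in>R. (b j r :: real)))"
proof -
  have "(\<Sum>l\<in>L. \<Sum>r\<in>R. \<Sum>j\<in>J. a j l * b j r) = (\<Sum>l\<in>L. \<Sum>j\<in>J. \<Sum>r\<in>R. a j l * b j r)"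
    by (intro sum.cong refl) (rule sum.swap)
  also have "\<dots> = (\<Sum>j\<in>J. \<Sum>l\<in>L. \<Sum>r\<in>R. a j l * b j r)" by (rule sum.swap)
  also have "\<dots> = (\<Sum>j\<in>J. (\<Sum>l\<in>L. a j l) * (\<Sum>r\<in>R. (b j r :: real)))"
    by (simp add: sum_product)
  finally show ?thesis .
qed

lemma gf_node:
  assumes "\<And>l r. f (Node l r) = (\<Sum>j\<in>J. a j l * b j r)"
  shows "gf f = fps_const (f Leaf) + fps_X * (\<Sum>j\<in>J. gf (a j) * gf (b j))"
proof (rule fps_ext)
  fix n show "gf f $ n = (fps_const (f Leaf) + fps_X * (\<Sum>j\<in>J. gf (a j) * gf (b j))) $ n"
  proof (cases n)
    case 0 then show ?thesis by (simp add: gf_0)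
  next
    case (Suc m)
    have "gf f $ n = (\<Sum>i\<le>m. \<Sum>l\<in>trees i. \<Sum>r\<in>trees (m - i). \<Sum>j\<in>J. a j l * b j r)"
      unfolding Suc gf_nth sum_trees_Suc assms ..
    also have "\<dots> = (\<Sum>i\<le>m. \<Sum>j\<in>J. (\<Sum>l\<in>trees i. a j l) * (\<Sum>r\<in>trees (m - i). b j r))"
      by (intro sum.cong refl) (rule sum_swap3)
    also have "\<dots> = (\<Sum>j\<in>J. \<Sum>i\<le>m. (\<Sum>l\<in>trees i. a j l) * (\<Sum>r\<in>trees (m - i). b j r))"
      by (rule sum.swap)
    also have "\<dots> = (fps_const (f Leaf) + fps_X * (\<Sum>j\<in>J. gf (a j) * gf (b j))) $ n"
      unfolding Suc by (simp add: fps_sum_nth gf_mult_nth)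
    finally show ?thesis .
  qed
qed

lemma gf_add: "gf (\<lambda>t. f t + g t) = gf f + gf g"
  by (rule fps_ext) (simp add: gf_nth sum.distrib)

lemma gf_sum: "gf (\<lambda>t. \<Sum>q\<in>Q. f q t) = (\<Sum>q\<in>Q. gf (f q))"
  by (rule fps_ext) (simp add: gf_nth fps_sum_nth, rule sum.swap)



definition NF :: "(bt \<Rightarrow> bt \<Rightarrow> real) \<Rightarrow> real fps" where
  "NF g = Abs_fps (\<lambda>n. \<Sum>i\<le>n. \<Sum>l\<in>trees i. \<Sum>r\<in>trees (n - i). g l r)"

lemma gf_nodeG: "gf f = fps_const (f Leaf) + fps_X * NF (\<lambda>l r. f (Node l r))"
proof (rule fps_ext)
  fix n show "gf f $ n = (fps_const (f Leaf) + fps_X * NF (\<lambda>l r. f (Node l r))) $ n"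
    by (cases n) (simp_all add: gf_0 gf_nth sum_trees_Suc NF_def trees_0)
qed

lemma NF_add: "NF (\<lambda>l r. g l r + h l r) = NF g + NF h"
  by (rule fps_ext) (simp add: NF_def sum.distrib)

lemma NF_sum: "NF (\<lambda>l r. \<Sum>q\<in>Q. g q l r) = (\<Sum>q\<in>Q. NF (g q))"
proof (rule fps_ext)
  fix n
  have "(\<Sum>i\<le>n. \<Sum>l\<in>trees i. \<Sum>r\<in>trees (n - i). \<Sum>q\<in>Q. g q l r)
      = (\<Sum>q\<in>Q. \<Sum>i\<le>n. \<Sum>l\<in>trees i. \<Sum>r\<in>trees (n - i). g q l r)"
  proof -
    have "(\<Sum>i\<le>n. \<Sum>l\<in>trees i. \<Sum>r\<in>trees (n - i). \<Sum>q\<in>Q. g q l r)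
        = (\<Sum>i\<le>n. \<Sum>l\<in>trees i. \<Sum>q\<in>Q. \<Sum>r\<in>trees (n - i). g q l r)"
      by (intro sum.cong refl) (rule sum.swap)
    also have "\<dots> = (\<Sum>i\<le>n. \<Sum>q\<in>Q. \<Sum>l\<in>trees i. \<Sum>r\<in>trees (n - i). g q l r)"
      by (intro sum.cong refl) (rule sum.swap)
    also have "\<dots> = (\<Sum>q\<in>Q. \<Sum>i\<le>n. \<Sum>l\<in>trees i. \<Sum>r\<in>trees (n - i). g q l r)"
      by (rule sum.swap)
    finally show ?thesis .
  qed
  then show "NF (\<lambda>l r. \<Sum>q\<in>Q. g q l r) $ n = (\<Sum>q\<in>Q. NF (g q)) $ n"
    by (simp add: NF_def fps_sum_nth)
qed

lemma NF_prod: "NF (\<lambda>l r. a l * b r) = gf a * gf b"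
  by (rule fps_ext) (simp add: NF_def gf_mult_nth sum_product)

definition ind :: "nat \<Rightarrow> bt \<Rightarrow> real" where "ind p t = (if Reg t = p then 1 else 0)"
definition ltr :: "nat \<Rightarrow> bt \<Rightarrow> real" where "ltr p t = (if Reg t < p then 1 else 0)"

definition Bz :: "real fps" where "Bz = gf (\<lambda>_. 1)"
definition Sz :: "real fps" where "Sz = gf (\<lambda>t. real (inner t))"
definition Fz :: "nat \<Rightarrow> real fps" where "Fz p = gf (ind p)"

fun eqcN :: "nat \<Rightarrow> bt \<Rightarrow> nat" where
  "eqcN N Leaf = 0"
| "eqcN N (Node l r) = eqcN N l + eqcN N r + (if Reg l = Reg r \<and> Reg l \<le> N then 1 else 0)"

definition Qz :: "nat \<Rightarrow> real fps" where "Qz N = gf (\<lambda>t. real (eqcN N t))"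

lemma Bz_eq: "Bz = 1 + fps_X * (Bz * Bz)"
proof -
  have "Bz = fps_const 1 + fps_X * NF (\<lambda>l r. (\<lambda>_. 1) l * (\<lambda>_. 1) r)"
    unfolding Bz_def by (subst gf_nodeG) simp
  then show ?thesis unfolding NF_prod Bz_def by simp
qed

lemma Sz_eq: "Sz = fps_X * (Bz * Bz + Sz * Bz + Bz * Sz)"
proof -
  have e: "(\<lambda>l r. real (inner (Node l r))) =
     (\<lambda>l r. ((\<lambda>_. 1) l * (\<lambda>_. 1) r + (\<lambda>t. real (inner t)) l * (\<lambda>_. 1) r) + (\<lambda>_. 1) l * (\<lambda>t. real (inner t)) r)"
    by (auto simp: fun_eq_iff)
  show ?thesis unfolding Sz_def
    by (subst gf_nodeG, unfold e NF_add NF_prod) (simp add: Bz_def algebra_simps)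
qed

lemma Fz_0: "Fz 0 = 1"
proof -
  have e: "(\<lambda>l r. ind 0 (Node l r)) = (\<lambda>l r. 0)"
    by (auto simp: fun_eq_iff ind_def)
  have z: "NF (\<lambda>l r. 0) = 0" by (rule fps_ext) (simp add: NF_def)
  show ?thesis unfolding Fz_def
    by (subst gf_nodeG, unfold e z) (simp add: ind_def)
qed

lemma ind_Node_Suc: "ind (Suc q) (Node l r) = ind (Suc q) l * ltr (Suc q) r + ltr (Suc q) l * ind (Suc q) r + ind q l * ind q r"
  by (auto simp: ind_def ltr_def max_def)

lemma ltr_sum: "ltr p t = (\<Sum>q<p. ind q t)"
proof -
  have "(\<Sum>q<p. ind q t) = (\<Sum>q\<in>{..<p}. if q = Reg t then 1 else 0)"
    by (intro sum.cong) (auto simp: ind_def)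
  also have "\<dots> = ltr p t" by (simp add: ltr_def)
  finally show ?thesis ..
qed

lemma gf_ltr: "gf (ltr p) = (\<Sum>q<p. Fz q)"
proof -
  have "ltr p = (\<lambda>t. \<Sum>q<p. ind q t)" by (rule ext) (rule ltr_sum)
  then show ?thesis unfolding Fz_def by (simp add: gf_sum)
qed

lemma Fz_Suc: "Fz (Suc q) = fps_X * (Fz (Suc q) * (\<Sum>q'<Suc q. Fz q') + (\<Sum>q'<Suc q. Fz q') * Fz (Suc q) + Fz q * Fz q)"
proof -
  have e: "(\<lambda>l r. ind (Suc q) (Node l r)) = (\<lambda>l r. (ind (Suc q) l * ltr (Suc q) r + ltr (Suc q) l * ind (Suc q) r) + ind q l * ind q r)"
    by (auto simp: fun_eq_iff ind_Node_Suc)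
  have "ind (Suc q) Leaf = 0" by (simp add: ind_def)
  then show ?thesis unfolding Fz_def
    by (subst gf_nodeG, unfold e NF_add NF_prod gf_ltr[unfolded Fz_def]) simp
qed

lemma Qz_eq: "Qz N = fps_X * (Qz N * Bz + Bz * Qz N + (\<Sum>p\<le>N. Fz p * Fz p))"
proof -
  have i: "(if Reg l = Reg r \<and> Reg l \<le> N then 1 else 0) = (\<Sum>p\<le>N. ind p l * ind p r)" for l r
  proof -
    show ?thesis
    proof (cases "Reg l = Reg r")
      case True
      have "(\<Sum>p\<le>N. ind p l * ind p r) = (\<Sum>p\<in>{..N}. if p = Reg l then 1 else 0)"
        using True by (intro sum.cong) (auto simp: ind_def)
      then show ?thesis using True by simp
    next
      case False
      have "(\<Sum>p\<le>N. ind p l * ind p r) = (\<Sum>p\<in>{..N}. 0)"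
        using False by (intro sum.cong) (auto simp: ind_def)
      then show ?thesis using False by simp
    qed
  qed
  have e: "(\<lambda>l r. real (eqcN N (Node l r))) =
     (\<lambda>l r. ((\<lambda>t. real (eqcN N t)) l * (\<lambda>_. 1) r + (\<lambda>_. 1) l * (\<lambda>t. real (eqcN N t)) r) + (\<Sum>p\<le>N. ind p l * ind p r))"
    by (auto simp: fun_eq_iff i[symmetric])
  show ?thesis unfolding Qz_def
    by (subst gf_nodeG, unfold e NF_add NF_prod NF_sum) (simp add: Bz_def Fz_def)
qed



lemma alg_G0: fixes x iB :: "'a::idom" assumes "(1-x)*iB = 1" shows "(1+x) - (1-x^2)*1*iB = 0"
  using assms by algebra

lemma alg_Gstep: fixes x w v iB1 iB2 :: "'a::idom"
  assumes "(1-v)*iB1 = 1" "(1-v^2)*iB2 = 1"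
  shows "(1+x) - (1-x^2)*w*iB1 + (1-x^2)*w*iB2 = (1+x) - (1-x^2)*(v*w)*iB2"
  using assms by algebra

lemma alg_D: fixes x w iA iB :: "'a::idom"
  assumes "(1+x)^2 * iA = 1" "(1-(x*w)^2) * iB = 1"
  shows "1 - 2 * (x * iA) * ((1+x) - (1-x^2)*((x*w)*w)*iB) = (1-x)*(1+x)*iA*(1+(x*w)^2)*iB"
  using assms by algebra

lemma alg_C: fixes v iB iC :: "'a::idom"
  assumes "(1-v^2) * iB = 1" "(1-v^4)*iC = 1"
  shows "(1+v^2)*iC = iB"
  using assms by algebra

lemma alg_F: fixes x w iA iB iC :: "'a::idom"
  assumes "(1+x)^2 * iA = 1" "(1-(x*w)^2) * iB = 1" "(1-(x*w)^4)*iC = 1"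
  shows "(1-x^2) * ((x*w)*w) * iC * (1 - 2 * (x * iA) * ((1+x) - (1-x^2)*((x*w)*w)*iB)) = (x * iA) * ((1-x^2) * w * iB)^2"
proof -
  have "(1-x^2) * ((x*w)*w) * iC * (1 - 2 * (x * iA) * ((1+x) - (1-x^2)*((x*w)*w)*iB))
     = (1-x^2) * ((x*w)*w) * ((1+(x*w)^2) * iC) * ((1-x)*(1+x)*iA*iB)"
    by (subst alg_D[OF assms(1,2)]) algebra
  also have "\<dots> = (1-x^2) * ((x*w)*w) * iB * ((1-x)*(1+x)*iA*iB)"
    using alg_C[OF assms(2,3)] by simp
  also have "\<dots> = (x * iA) * ((1-x^2) * w * iB)^2" by algebra
  finally show ?thesis .
qed

lemma alg_Q: fixes x w iA iB :: "'a::idom"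
  assumes "(1+x)^2 * iA = 1"
  shows "(1-x^2) * (x * w^2 * iB^2) * (1 - 2 * (x * iA) * (1+x)) = (x * iA) * ((1-x^2) * w * iB)^2"
proof -
  have h: "1 - 2 * (x * iA) * (1+x) = (1-x)*(1+x)*iA" using assms by algebra
  show ?thesis by (subst h) algebra
qed

lemma alg_S: fixes x iA iD :: "'a::idom"
  assumes "(1+x)^2 * iA = 1" "(1-x)*iD = 1"
  shows "(x*(1+x)*iD) * (1 - 2*(x*iA)*(1+x)) = (x*iA)*(1+x)^2"
  using assms by algebra

lemma alg_R: fixes x iD R :: "'a::idom"
  assumes "R*(1-x) = 1+x" "(1-x)*iD = 1"
  shows "(1+x) + x*(1+x)*iD = R"
proof -
  have "R = R*((1-x)*iD)" using assms(2) by simp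
  also have "\<dots> = (R*(1-x))*iD" by (simp add: mult.assoc)
  also have "\<dots> = (1+x)*iD" using assms(1) by simp
  finally have r: "R = (1+x)*iD" .
  have "(1+x)+x*(1+x)*iD = (1+x)*((1-x)*iD) + x*(1+x)*iD" using assms(2) by simp
  also have "\<dots> = (1+x)*iD" by algebra
  finally show ?thesis using r by simp
qed

definition iA :: "real fps" where "iA = inverse ((1 + fps_X)^2)"
definition Xu :: "real fps" where "Xu = fps_X * iA"
definition Fu :: "nat \<Rightarrow> real fps" where
  "Fu q = (1 - fps_X^2) * fps_X^(2^q - 1) * inverse (1 - fps_X^(2^Suc q))"
definition Gu :: "nat \<Rightarrow> real fps" where "Gu p = (\<Sum>q<p. Fu q)"

lemma hA: "(1 + fps_X)^2 * iA = 1"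
  unfolding iA_def by (rule inverse_mult_eq_1') (simp add: fps_nth_power_0)

lemma hK: "K > 0 \<Longrightarrow> (1 - fps_X^K) * inverse (1 - fps_X^K :: real fps) = 1"
  by (rule inverse_mult_eq_1') simp

lemma pow_split:
  assumes "M > 0"
  shows "(fps_X::real fps)^M = fps_X * fps_X^(M-1)"
    "(fps_X::real fps)^(2*M - 1) = (fps_X * fps_X^(M-1)) * fps_X^(M-1)"
    "(fps_X::real fps)^(2*M) = (fps_X * fps_X^(M-1))^2"
    "(fps_X::real fps)^(4*M) = (fps_X * fps_X^(M-1))^4"
proof -
  obtain m where m: "M = Suc m" using assms by (cases M) auto
  show a: "(fps_X::real fps)^M = fps_X * fps_X^(M-1)"
    unfolding m by (simp only: power_Suc diff_Suc_1)
  have "2*M - 1 = M + (M - 1)" using assms by simp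
  then show "(fps_X::real fps)^(2*M - 1) = (fps_X * fps_X^(M-1)) * fps_X^(M-1)"
    using a by (metis power_add)
  show "(fps_X::real fps)^(2*M) = (fps_X * fps_X^(M-1))^2"
    using a by (metis mult.commute power_mult)
  show "(fps_X::real fps)^(4*M) = (fps_X * fps_X^(M-1))^4"
    using a by (metis mult.commute power_mult)
qed

lemma X_mult_0: "(fps_X * (f::real fps)) $ 0 = 0" by simp

lemma Gu_closed: "Gu p = (1 + fps_X) - (1 - fps_X^2) * fps_X^(2^p - 1) * inverse (1 - fps_X^(2^p))"
proof (induction p)
  case 0
  have "(1+fps_X) - (1-fps_X^2)*1*inverse (1 - fps_X) = (0::real fps)"
    by (rule alg_G0) (rule inverse_mult_eq_1', simp)
  then show ?case by (simp add: Gu_def)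
next
  case (Suc p)
  define M where "M = (2::nat)^p"
  have M: "M > 0" by (simp add: M_def)
  define w where "w = (fps_X::real fps)^(M-1)"
  define v where "v = fps_X * w"
  have n1: "(2::nat)^Suc p = 2 * M" by (simp add: M_def)
  have e0: "(fps_X::real fps)^(2^p) = v" "(fps_X::real fps)^(2^p - 1) = w"
    using pow_split(1)[OF M] unfolding v_def w_def M_def by simp_all
  have e1: "(fps_X::real fps)^(2^Suc p - 1) = v * w" and e2: "(fps_X::real fps)^(2^Suc p) = v^2"
    unfolding n1 pow_split[OF M] v_def w_def by simp_all
  have "Gu (Suc p) = Gu p + Fu p" by (simp add: Gu_def)
  also have "\<dots> = (1+fps_X) - (1-fps_X^2)*w*inverse (1 - v) + (1-fps_X^2)*w*inverse (1-v^2)"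
    unfolding Suc Fu_def e2 e0 ..
  also have "\<dots> = (1+fps_X) - (1-fps_X^2)*(v*w)*inverse (1-v^2)"
    by (rule alg_Gstep) (auto intro!: inverse_mult_eq_1' simp: v_def power2_eq_square)
  finally show ?case unfolding e1 e2 .
qed

lemma Fu_0: "Fu 0 = 1"
  unfolding Fu_def by (simp add: inverse_mult_eq_1')

lemma Fu_step: "Fu (Suc q) * (1 - 2 * Xu * Gu (Suc q)) = Xu * (Fu q)^2"
proof -
  define M where "M = (2::nat)^q"
  have M: "M > 0" by (simp add: M_def)
  define w where "w = (fps_X::real fps)^(M-1)"
  let ?x = "fps_X :: real fps"
  have n1: "(2::nat)^Suc q = 2 * M" "(2::nat)^Suc (Suc q) = 4 * M" by (simp_all add: M_def)
  have a: "Fu (Suc q) = (1-?x^2) * ((?x*w)*w) * inverse (1 - (?x*w)^4)"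
    unfolding Fu_def w_def n1 pow_split[OF M] ..
  have b: "Gu (Suc q) = (1+?x) - (1-?x^2)*((?x*w)*w)*inverse (1-(?x*w)^2)"
    unfolding Gu_closed w_def n1 pow_split[OF M] ..
  have c: "Fu q = (1-?x^2) * w * inverse (1-(?x*w)^2)"
    unfolding Fu_def n1(1) M_def[symmetric] pow_split(3)[OF M] w_def ..
  have i2: "(1-(?x*w)^2) * inverse (1-(?x*w)^2) = 1"
    by (rule inverse_mult_eq_1') (simp add: power2_eq_square)
  have i4: "(1-(?x*w)^4) * inverse (1-(?x*w)^4) = 1"
    by (rule inverse_mult_eq_1') (simp add: power_mult_distrib)
  show ?thesis unfolding a b c Xu_def by (rule alg_F[OF hA i2 i4])
qed


definition Ez :: "nat \<Rightarrow> real fps" where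
  "Ez K = Abs_fps (\<lambda>j. if K dvd (j+1) then real ((j+1) div K) else 0)"

lemma Ez_coeff_identity:
  assumes K: "K > 0"
  shows "Ez K $ j - 2 * (if j < K then 0 else Ez K $ (j - K)) + (if j < 2*K then 0 else Ez K $ (j - 2*K))
         = (if j = K - 1 then 1 else 0)"
proof (cases "K dvd (j+1)")
  case False
  have "\<not> K dvd (j - K + 1)" if "\<not> j < K"
  proof
    assume "K dvd (j - K + 1)"
    then have "K dvd (j - K + 1 + K)" by (rule dvd_add) simp
    moreover have "j - K + 1 + K = j + 1" using that by simp
    ultimately show False using False by simp
  qed
  moreover have "\<not> K dvd (j - 2*K + 1)" if "\<not> j < 2*K"
  proof
    assume "K dvd (j - 2*K + 1)"
    then have "K dvd (j - 2*K + 1 + K*2)" by (rule dvd_add) simp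
    moreover have "j - 2*K + 1 + K*2 = j + 1" using that by simp
    ultimately show False using False by simp
  qed
  moreover have "j \<noteq> K - 1" using False K by auto
  ultimately show ?thesis using False by (simp add: Ez_def)
next
  case True
  then obtain m where m: "j + 1 = K * m" by blast
  have m1: "m \<ge> 1" using m by (cases m) auto
  show ?thesis
  proof (cases "m = 1")
    case True
    then have "j = K - 1" using m by simp
    then show ?thesis using K by (simp add: Ez_def)
  next
    case False
    then have m2: "m \<ge> 2" using m1 by simp
    have jK: "\<not> j < K"
    proof
      assume "j < K"
      then have "K * m \<le> K * 1" using m by linarith
      then show False using m2 K by (simp only: mult_le_cancel1) simp
    qed
    have e0: "Ez K $ j = real m" using m K by (simp add: Ez_def)
    have "j - K + 1 = K * (m - 1)" using m jK by (simp add: algebra_simps diff_mult_distrib2)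
    then have e1: "Ez K $ (j - K) = real m - 1" using K m2 by (simp add: Ez_def of_nat_diff)
    have jne: "j \<noteq> K - 1" using jK K by simp
    show ?thesis
    proof (cases "m = 2")
      case True
      then have "j < 2*K" using m by simp
      then show ?thesis using e0 e1 jK jne True by simp
    next
      case False
      then have m3: "m \<ge> 3" using m2 by simp
      have j2: "\<not> j < 2*K"
      proof
        assume "j < 2*K"
        then have "K * m \<le> K * 2" using m by linarith
        then show False using m3 K by (simp only: mult_le_cancel1) simp
      qed
      have "j - 2*K + 1 = K * (m - 2)" using m j2 by (simp add: algebra_simps diff_mult_distrib2)
      then have e2: "Ez K $ (j - 2*K) = real m - 2" using K m3 by (simp add: Ez_def of_nat_diff)
      show ?thesis using e0 e1 e2 jK j2 jne by simp
    qed
  qed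
qed

lemma Ez_mult:
  assumes K: "K > 0"
  shows "Ez K * (1 - fps_X^K)^2 = fps_X^(K-1)"
proof -
  have g: "e * (1 - a)^2 = e - 2 * (a * e) + (a * a) * e" for e a :: "real fps" by algebra
  have "(fps_X::real fps)^(2*K) = fps_X^K * fps_X^K" by (simp only: mult_2 power_add)
  then have "Ez K * (1 - fps_X^K)^2 = Ez K - 2 * (fps_X^K * Ez K) + fps_X^(2*K) * Ez K"
    using g by simp
  also have "\<dots> = fps_X^(K-1)"
  proof (rule fps_ext)
    fix j
    have "(Ez K - 2 * (fps_X^K * Ez K) + fps_X^(2*K) * Ez K) $ j
        = Ez K $ j - 2 * (if j < K then 0 else Ez K $ (j - K)) + (if j < 2*K then 0 else Ez K $ (j - 2*K))"
      by (simp only: fps_add_nth fps_sub_nth numeral_fps_const fps_mult_left_const_nth fps_X_power_mult_nth)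
    also have "\<dots> = (fps_X^(K-1) :: real fps) $ j" using Ez_coeff_identity[OF K] by simp
    finally show "(Ez K - 2 * (fps_X^K * Ez K) + fps_X^(2*K) * Ez K) $ j = (fps_X^(K-1) :: real fps) $ j" .
  qed
  finally show ?thesis .
qed

lemma Ez_eq:
  assumes K: "K > 0"
  shows "Ez K = fps_X^(K-1) * (inverse (1 - fps_X^K))^2"
proof -
  have "Ez K = Ez K * ((1 - fps_X^K) * inverse (1 - fps_X^K))^2" using hK[OF K] by simp
  also have "\<dots> = (Ez K * (1 - fps_X^K)^2) * (inverse (1 - fps_X^K))^2"
    by (simp add: power_mult_distrib mult.assoc)
  finally show ?thesis using Ez_mult[OF K] by simp
qed

definition Qu :: "nat \<Rightarrow> real fps" where
  "Qu N = (1 - fps_X^2) * (\<Sum>p\<le>N. Ez (2^Suc p))"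

lemma Qu_eq: "Qu N * (1 - 2 * Xu * (1 + fps_X)) = Xu * (\<Sum>p\<le>N. (Fu p)^2)"
proof -
  have t: "(1 - fps_X^2) * Ez (2^Suc p) * (1 - 2 * Xu * (1 + fps_X)) = Xu * (Fu p)^2" for p
  proof -
    define M where "M = (2::nat)^p"
    have M: "M > 0" by (simp add: M_def)
    define w where "w = (fps_X::real fps)^(M-1)"
    define iB where "iB = inverse (1 - (fps_X::real fps)^(2*M))"
    have n1: "(2::nat)^Suc p = 2 * M" by (simp add: M_def)
    have E: "Ez (2^Suc p) = fps_X * w^2 * iB^2"
    proof -
      have "Ez (2^Suc p) = fps_X^(2*M - 1) * iB^2" unfolding n1 iB_def by (rule Ez_eq) (simp add: M)
      also have "fps_X^(2*M - 1) = fps_X * w^2" unfolding pow_split(2)[OF M] w_def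
        by (simp add: power2_eq_square mult.assoc)
      finally show ?thesis .
    qed
    have F: "Fu p = (1 - fps_X^2) * w * iB"
      unfolding Fu_def n1 M_def[symmetric] w_def iB_def ..
    show ?thesis unfolding E F Xu_def by (rule alg_Q[OF hA])
  qed
  have "Qu N * (1 - 2 * Xu * (1 + fps_X)) = (\<Sum>p\<le>N. (1 - fps_X^2) * Ez (2^Suc p) * (1 - 2 * Xu * (1 + fps_X)))"
    unfolding Qu_def by (simp add: sum_distrib_left sum_distrib_right)
  also have "\<dots> = Xu * (\<Sum>p\<le>N. (Fu p)^2)" unfolding t by (simp add: sum_distrib_left)
  finally show ?thesis .
qed

definition Su :: "real fps" where "Su = fps_X * (1 + fps_X) * inverse (1 - fps_X)"

lemma hD: "(1 - fps_X) * inverse (1 - fps_X :: real fps) = 1"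
  by (rule inverse_mult_eq_1') simp

lemma Su_eq: "Su * (1 - 2 * Xu * (1 + fps_X)) = Xu * (1 + fps_X)^2"
  unfolding Su_def Xu_def by (rule alg_S[OF hA hD])

definition Ru :: "real fps" where "Ru = Abs_fps (\<lambda>j. if j = 0 then 1 else 2)"

lemma Ru_mult: "Ru * (1 - fps_X) = 1 + fps_X"
proof (rule fps_ext)
  fix j
  have "(Ru * (1 - fps_X)) $ j = Ru $ j - (fps_X * Ru) $ j" by (simp add: algebra_simps)
  then show "(Ru * (1 - fps_X)) $ j = (1 + fps_X :: real fps) $ j"
    by (cases j) (auto simp: Ru_def fps_X_mult_nth)
qed

lemma BuSu: "(1 + fps_X) + Su = Ru"
  unfolding Su_def by (rule alg_R[OF Ru_mult hD])



definition Uz :: "real fps" where "Uz = Bz - 1"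

lemma Bz_0: "Bz $ 0 = 1" unfolding Bz_def by (simp add: gf_0)

lemma Uz_0: "Uz $ 0 = 0" unfolding Uz_def by (simp add: Bz_0)

lemma Bz_Uz: "Bz = 1 + Uz" unfolding Uz_def by simp

lemma Uz_eq: "Uz = fps_X * (1 + Uz)^2"
proof -
  have "Bz - 1 = fps_X * (Bz*Bz)" using Bz_eq by (metis add_diff_cancel_left')
  moreover have h: "1 + (Bz - 1) = Bz" by simp
  ultimately show ?thesis unfolding Uz_def h power2_eq_square by simp
qed

lemmas phi_simps = fps_compose_mult_distrib[OF Uz_0] fps_compose_add_distrib fps_compose_sub_distrib
  fps_compose_power[symmetric, OF Uz_0] fps_compose_sum_distrib

lemma phi_2: "(2::real fps) oo Uz = 2"
  by (simp add: numeral_fps_const)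

lemma phi_X: "fps_X oo Uz = Uz"
  using Uz_0 by simp

lemma phi_Bu: "(1 + fps_X) oo Uz = Bz"
  by (simp add: fps_compose_add_distrib phi_X Bz_Uz)

lemma hU: "(1 + Uz)^2 * inverse ((1 + Uz)^2) = 1"
  by (rule inverse_mult_eq_1') (simp add: fps_nth_power_0 Uz_0)

lemma phi_Xu: "Xu oo Uz = fps_X"
proof -
  have "iA oo Uz = inverse ((1 + Uz)^2)"
    unfolding iA_def by (subst fps_inverse_compose) (simp_all add: Uz_0 fps_nth_power_0 phi_simps phi_X)
  then have "Xu oo Uz = Uz * inverse ((1 + Uz)^2)"
    unfolding Xu_def by (simp add: phi_simps phi_X)
  also have "\<dots> = fps_X * ((1 + Uz)^2 * inverse ((1 + Uz)^2))"
    by (subst Uz_eq) (simp add: mult.assoc)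
  finally show ?thesis using hU by simp
qed

lemma cancel_fps:
  fixes a b c :: "real fps"
  assumes "a * c = b * c" "c $ 0 \<noteq> 0"
  shows "a = b"
proof -
  have "c \<noteq> 0" using assms(2) by auto
  then show ?thesis using assms(1) by simp
qed

lemma Fz_phi: "Fz p = Fu p oo Uz"
proof (induction p rule: less_induct)
  case (less p)
  show ?case
  proof (cases p)
    case 0 then show ?thesis by (simp add: Fz_0 Fu_0)
  next
    case (Suc q)
    define L where "L = (\<Sum>q'<Suc q. Fz q')"
    have L: "L = Gu (Suc q) oo Uz"
      unfolding L_def Gu_def fps_compose_sum_distrib using less Suc by (intro sum.cong) auto
    have e1: "Fz p * (1 - 2 * fps_X * L) = fps_X * (Fz q)^2"
    proof -
      have "Fz p = fps_X * (Fz p * L + L * Fz p + Fz q * Fz q)"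
        unfolding L_def Suc by (rule Fz_Suc)
      then show ?thesis by (simp add: algebra_simps power2_eq_square)
    qed
    have e2: "(Fu p oo Uz) * (1 - 2 * fps_X * L) = fps_X * (Fz q)^2"
    proof -
      have "(Fu p * (1 - 2 * Xu * Gu p)) oo Uz = (Xu * (Fu q)^2) oo Uz"
        unfolding Suc by (subst Fu_step) rule
      then show ?thesis
        unfolding L Suc using less[of q] Suc by (simp add: phi_simps phi_Xu phi_2)
    qed
    show ?thesis
      by (rule cancel_fps[of _ "1 - 2 * fps_X * L"]) (use e1 e2 in simp_all)
  qed
qed


lemma one_m2XBz: "(1 - 2 * fps_X * Bz) $ 0 \<noteq> 0"
  by simp

lemma Sz_phi: "Sz = Su oo Uz"
proof -
  have e1: "Sz * (1 - 2 * fps_X * Bz) = fps_X * Bz^2"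
  proof -
    have "Sz = fps_X * (Bz * Bz + Sz * Bz + Bz * Sz)" by (rule Sz_eq)
    then show ?thesis by (simp add: algebra_simps power2_eq_square)
  qed
  have e2: "(Su oo Uz) * (1 - 2 * fps_X * Bz) = fps_X * Bz^2"
  proof -
    have "(Su * (1 - 2 * Xu * (1 + fps_X))) oo Uz = (Xu * (1 + fps_X)^2) oo Uz"
      by (subst Su_eq) rule
    then show ?thesis by (simp add: phi_simps phi_Xu phi_2 phi_X Bz_Uz)
  qed
  show ?thesis by (rule cancel_fps[OF _ one_m2XBz]) (use e1 e2 in simp)
qed

lemma Qz_phi: "Qz N = Qu N oo Uz"
proof -
  have e1: "Qz N * (1 - 2 * fps_X * Bz) = fps_X * (\<Sum>p\<le>N. (Fz p)^2)"
  proof -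
    have "Qz N = fps_X * (Qz N * Bz + Bz * Qz N + (\<Sum>p\<le>N. Fz p * Fz p))" by (rule Qz_eq)
    then show ?thesis by (simp add: algebra_simps power2_eq_square)
  qed
  have e2: "(Qu N oo Uz) * (1 - 2 * fps_X * Bz) = fps_X * (\<Sum>p\<le>N. (Fz p)^2)"
  proof -
    have "(Qu N * (1 - 2 * Xu * (1 + fps_X))) oo Uz = (Xu * (\<Sum>p\<le>N. (Fu p)^2)) oo Uz"
      by (subst Qu_eq) rule
    then show ?thesis by (simp add: phi_simps phi_Xu phi_2 phi_X Bz_Uz Fz_phi)
  qed
  show ?thesis by (rule cancel_fps[OF _ one_m2XBz]) (use e1 e2 in simp)
qed

lemma Reg_le_inner: "Reg t \<le> inner t"
  by (induction t) auto

lemma eqcN_eq: "inner t \<le> N \<Longrightarrow> eqcN N t = eqc t"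
proof (induction t)
  case Leaf then show ?case by simp
next
  case (Node l r)
  have "Reg l \<le> N" using Reg_le_inner[of l] Node.prems by simp
  then show ?case using Node by simp
qed

lemma total_sum:
  assumes "n \<le> N"
  shows "(\<Sum>t\<in>trees n. real (card (branches t))) = ((Ru + Qu N) oo Uz) $ n"
proof -
  have "(\<Sum>t\<in>trees n. real (card (branches t))) = (\<Sum>t\<in>trees n. 1 + real (inner t) + real (eqcN N t))"
    using assms by (intro sum.cong refl) (auto simp: card_branches eqcN_eq trees_def)
  also have "\<dots> = (Bz + Sz + Qz N) $ n"
    by (simp add: Bz_def Sz_def Qz_def gf_nth sum.distrib)
  also have "Bz + Sz + Qz N = (Ru + Qu N) oo Uz"
    unfolding Sz_phi Qz_phi BuSu[symmetric] by (simp add: phi_simps phi_X Bz_Uz)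
  finally show ?thesis .
qed

lemma card_trees: "real (card (trees n)) = Uz $ n + (if n = 0 then 1 else 0)"
proof -
  have "real (card (trees n)) = Bz $ n" by (simp add: Bz_def gf_nth)
  then show ?thesis by (simp add: Bz_Uz)
qed



lemma Uz_pow_rec: "Uz^(Suc i) = fps_X * (Uz^i + 2 * Uz^(Suc i) + Uz^(Suc (Suc i)))"
proof -
  have "Uz^(Suc i) = Uz^i * Uz" by (simp add: power_Suc2)
  also have "\<dots> = Uz^i * (fps_X * (1 + Uz)^2)" by (subst Uz_eq) rule
  also have "\<dots> = fps_X * (Uz^i + 2 * Uz^(Suc i) + Uz^(Suc (Suc i)))"
    by (simp add: algebra_simps power2_eq_square power_Suc2)
  finally show ?thesis .
qed

definition cc :: "nat \<Rightarrow> nat \<Rightarrow> real" where "cc n j = (Uz^j) $ n"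

lemma cc_rec: "cc (Suc n) (Suc i) = cc n i + 2 * cc n (Suc i) + cc n (Suc (Suc i))"
  unfolding cc_def by (subst Uz_pow_rec) (simp add: numeral_fps_const del: power_Suc)

lemma cc_0_right: "cc n 0 = (if n = 0 then 1 else 0)"
  unfolding cc_def by simp

lemma cc_0_left: "cc 0 j = (if j = 0 then 1 else 0)"
  unfolding cc_def by (cases j) (simp_all add: fps_mult_nth_0 Uz_0 del: power_Suc add: power_Suc2)

lemma binomz_Suc: "real (binomz (Suc m) a) = real (binomz m a) + real (binomz m (a - 1))"
proof (cases "a < 0")
  case True then show ?thesis by (simp add: binomz_def)
next
  case False
  show ?thesis
  proof (cases "a = 0")
    case True then show ?thesis by (simp add: binomz_def)
  next
    case False
    with \<open>\<not> a < 0\<close> have "nat a = Suc (nat (a - 1))" by simp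
    then show ?thesis using False \<open>\<not> a < 0\<close> by (simp add: binomz_def)
  qed
qed

definition cf :: "nat \<Rightarrow> nat \<Rightarrow> real" where
  "cf n j = real (binomz (2*n - 1) (int n - int j)) - real (binomz (2*n - 1) (int n - int j - 1))"

lemma cf_0: assumes "n \<ge> 1" shows "cf n 0 = 0"
proof -
  have "2*n - 1 - n = n - 1" by simp
  then have "(2*n - 1) choose n = (2*n - 1) choose (n - 1)"
    using binomial_symmetric[of n "2*n-1"] assms by simp
  moreover have "nat (int n - 1) = n - 1" by simp
  ultimately show ?thesis unfolding cf_def binomz_def using assms by simp
qed

lemma cc_cf: "cc (Suc m) j = cf (Suc m) j"
proof (induction m arbitrary: j)
  case 0
  show ?case
  proof (cases j)
    case 0 then show ?thesis by (simp add: cc_0_right cf_0)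
  next
    case (Suc i)
    then show ?thesis by (cases i) (auto simp: cc_rec cc_0_left cf_def binomz_def)
  qed
next
  case (Suc m)
  show ?case
  proof (cases j)
    case 0 then show ?thesis by (simp add: cc_0_right cf_0 del: mult_Suc_right)
  next
    case (Suc i)
    define n where "n = Suc m"
    define B where "B = (\<lambda>a. real (binomz (2*n - 1) a))"
    define a where "a = int n - int i"
    have top: "2 * Suc n - 1 = Suc (Suc (2*n - 1))" by (simp add: n_def)
    have B2: "real (binomz (2 * Suc n - 1) b) = B b + 2 * B (b - 1) + B (b - 2)" for b
      unfolding top binomz_Suc B_def by simp
    have "cc (Suc n) j = cc n i + 2 * cc n (Suc i) + cc n (Suc (Suc i))"
      by (unfold Suc, rule cc_rec)
    also have "\<dots> = cf n i + 2 * cf n (Suc i) + cf n (Suc (Suc i))"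
      by (simp only: n_def Suc.IH)
    also have "\<dots> = (B a - B (a-1)) + 2 * (B (a-1) - B (a-2)) + (B (a-2) - B (a-3))"
      unfolding cf_def B_def a_def by (simp add: algebra_simps)
    also have "\<dots> = cf (Suc n) j"
      unfolding cf_def B2 Suc a_def by (simp add: algebra_simps)
    finally show ?thesis unfolding n_def .
  qed
qed

lemma cc_D:
  assumes "k \<ge> 1"
  shows "cc n (k - 1) - cc n (k + 1) =
    real (binomz (2 * n) (int n + 1 - int k)) - 2 * real (binomz (2 * n) (int n - int k))
        + real (binomz (2 * n) (int n - 1 - int k))"
proof (cases n)
  case 0
  then show ?thesis using assms by (cases "k = 1") (auto simp: cc_0_left binomz_def)
next
  case (Suc m)
  define B where "B = (\<lambda>a. real (binomz (2*n - 1) a))"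
  define a where "a = int n - int k"
  have top: "2 * n = Suc (2*n - 1)" using Suc by simp
  have B1: "real (binomz (2 * n) b) = B b + B (b - 1)" for b
    by (subst top) (simp add: binomz_Suc B_def)
  have "cc n (k - 1) - cc n (k + 1) = cf n (k - 1) - cf n (k + 1)"
    using cc_cf Suc by simp
  also have "\<dots> = (B (a + 1) - B a) - (B (a - 1) - B (a - 2))"
    unfolding cf_def B_def a_def using assms by (simp add: of_nat_diff algebra_simps)
  also have "\<dots> = real (binomz (2 * n) (int n + 1 - int k)) - 2 * real (binomz (2 * n) (int n - int k))
        + real (binomz (2 * n) (int n - 1 - int k))"
    unfolding B1 a_def by (simp add: algebra_simps)
  finally show ?thesis .
qed

lemma cc_high: "n < j \<Longrightarrow> cc n j = 0"
proof -
  assume "n < j"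
  have "Uz^j = fps_X^j * (1 + Uz)^(2*j)"
    by (subst Uz_eq) (simp add: power_mult_distrib power_mult)
  then show "cc n j = 0" unfolding cc_def using \<open>n < j\<close> by (simp add: fps_X_power_mult_nth)
qed



definition hh :: "nat \<Rightarrow> real" where
  "hh k = (2 - 1 / 2 ^ multiplicity (2::nat) k) * real k"

lemma geo: "(\<Sum>p<v. 1 / 2^(Suc p) :: real) = 1 - 1 / 2^v"
  by (induction v) (simp_all add: field_simps)

lemma pow2_dvd_iff: "k > 0 \<Longrightarrow> (2::nat)^i dvd k \<longleftrightarrow> i \<le> multiplicity 2 k"
  by (rule power_dvd_iff_le_multiplicity) auto

lemma e_sum:
  assumes k: "1 \<le> k" "k \<le> N + 1"
  shows "(\<Sum>p\<le>N. if (2::nat)^Suc p dvd k then real (k div 2^Suc p) else 0)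
       = real k * (1 - 1 / 2 ^ multiplicity (2::nat) k)"
proof -
  define v where "v = multiplicity (2::nat) k"
  have "2^v dvd k" unfolding v_def by (rule multiplicity_dvd)
  then have "2^v \<le> k" using k by (intro dvd_imp_le) auto
  then have vN: "v \<le> N" using k less_exp[of v] by linarith
  have "(\<Sum>p\<le>N. if (2::nat)^Suc p dvd k then real (k div 2^Suc p) else 0)
      = (\<Sum>p\<le>N. if p < v then real k * (1 / 2^Suc p) else 0)"
  proof (intro sum.cong refl)
    fix p
    have d: "(2::nat)^Suc p dvd k \<longleftrightarrow> p < v" using pow2_dvd_iff[of k "Suc p"] k unfolding v_def by auto
    show "(if (2::nat)^Suc p dvd k then real (k div 2^Suc p) else 0) = (if p < v then real k * (1 / 2^Suc p) else 0)"
      using d by (auto simp: real_of_nat_div)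
  qed
  also have "\<dots> = (\<Sum>p\<in>{..N} \<inter> {p. p < v}. real k * (1 / 2^Suc p))"
    by (simp only: sum.inter_restrict[OF finite_atMost] mem_Collect_eq)
  also have "{..N} \<inter> {p. p < v} = {..<v}" using vN by auto
  also have "(\<Sum>p<v. real k * (1 / 2^Suc p)) = real k * (1 - 1 / 2^v)"
    by (simp only: sum_distrib_left[symmetric] geo)
  finally show ?thesis unfolding v_def .
qed

lemma hh_e:
  assumes "1 \<le> k" "k \<le> N + 1"
  shows "hh k = real k + (\<Sum>p\<le>N. Ez (2^Suc p)) $ (k - 1)"
proof -
  have kk: "k - 1 + 1 = k" using assms by simp
  have en: "Ez K $ j = (if K dvd (j+1) then real ((j+1) div K) else 0)" for K j
    unfolding Ez_def by simp
  have "(\<Sum>p\<le>N. Ez (2^Suc p)) $ (k - 1) = (\<Sum>p\<le>N. if (2::nat)^Suc p dvd k then real (k div 2^Suc p) else 0)"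
    by (simp only: fps_sum_nth en kk)
  then show ?thesis unfolding hh_def using e_sum[OF assms] by (simp add: algebra_simps)
qed

lemma hh_0: "hh 0 = 0" by (simp add: hh_def)

lemma H_coef:
  assumes "j \<le> n"
  shows "(Ru + Qu n) $ j = hh (j + 1) - hh (j - 1)"
proof -
  define S where "S = (\<Sum>p\<le>n. Ez (2^Suc p))"
  have Q: "Qu n $ j = S $ j - (if j < 2 then 0 else S $ (j - 2))"
  proof -
    have "Qu n = S - fps_X^2 * S" unfolding Qu_def S_def by (simp add: algebra_simps)
    then show ?thesis by (simp add: fps_X_power_mult_nth)
  qed
  have h1: "hh (j + 1) = real (j + 1) + S $ j"
    using hh_e[of "j+1" n] assms unfolding S_def by simp
  show ?thesis
  proof (cases "j < 2")
    case True
    then have "hh (j - 1) = 0" using hh_0 by (cases j) auto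
    then show ?thesis using True Q h1 by (cases j) (auto simp: Ru_def)
  next
    case False
    have h2: "hh (j - 1) = real (j - 1) + S $ (j - 2)"
      using hh_e[of "j-1" n] assms False unfolding S_def by (simp add: numeral_2_eq_2)
    show ?thesis using False Q h1 h2 by (simp add: Ru_def of_nat_diff)
  qed
qed

lemma shift_sum:
  fixes f g :: "nat \<Rightarrow> real"
  assumes "f 0 = 0"
  shows "(\<Sum>j\<le>n. (f (j+1) - f (j-1)) * g j)
       = (\<Sum>k=1..n+1. f k * (g (k-1) - g (k+1))) + f n * g (n+1) + f (n+1) * g (n+2)"
proof (induction n)
  case 0 then show ?case using assms by (simp add: algebra_simps)
next
  case (Suc n)
  show ?case using Suc by (simp add: algebra_simps)
qed

lemma catalan:
  "real (card (trees n)) * real (n + 1) = real ((2 * n) choose n)"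
proof (cases n)
  case 0 then show ?thesis by (simp add: trees_0)
next
  case (Suc m)
  have c: "real (card (trees n)) = cf n 1"
    using card_trees[of n] cc_cf[of m 1] Suc by (simp add: cc_def)
  have n1: "n \<ge> 1" using Suc by simp
  define A where "A = (2*n - 1) choose (n - 1)"
  have two: "(2*n) choose n = 2 * A"
  proof -
    have "2*n = Suc (2*n-1)" "n = Suc (n - 1)" using n1 by simp_all
    then have "(2*n) choose n = ((2*n-1) choose (n-1)) + ((2*n-1) choose n)"
      by (metis binomial_Suc_Suc)
    moreover have "2*n-1 - n = n - 1" by simp
    then have "(2*n-1) choose n = (2*n-1) choose (n-1)"
      using binomial_symmetric[of n "2*n-1"] n1 by simp
    ultimately show ?thesis unfolding A_def by simp
  qed
  show ?thesis
  proof (cases "n = 1")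
    case True
    then show ?thesis using c by (simp add: cf_def binomz_def)
  next
    case False
    then have n2: "n \<ge> 2" using n1 by simp
    define Bm where "Bm = (2*n - 1) choose (n - 2)"
    have i1: "int n - int 1 = int (n - 1)" "int (n - 1) - 1 = int (n - 2)" using n2 by auto
    have cB: "cf n 1 = real A - real Bm"
      unfolding cf_def i1 binomz_def A_def Bm_def by (simp only: nat_int of_nat_less_0_iff if_False)
    have rel: "Bm * (n + 1) = A * (n - 1)"
    proof -
      have x1: "(2*n - 1 - (n - 2)) * ((2*n-1) choose (n-2)) = (2*n-1) * ((2*n-1-1) choose (n-2))"
        by (rule binomial_absorb_comp)
      have p0: "0 < n - 1" using n2 by simp
      have x2: "(n - 1) * ((2*n-1) choose (n-1)) = (2*n-1) * ((2*n-1-1) choose (n-1-1))"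
        using times_binomial_minus1_eq[OF p0, of "2*n-1"] .
      have e: "2*n - 1 - (n - 2) = n + 1" "n - 1 - 1 = n - 2" using n2 by auto
      have y1: "(n+1) * Bm = (2*n-1) * ((2*n-1-1) choose (n-2))" using x1 unfolding Bm_def e(1) .
      have y2: "(n-1) * A = (2*n-1) * ((2*n-1-1) choose (n-2))" using x2 unfolding A_def e(2) .
      show ?thesis using y1 y2 by (metis mult.commute)
    qed
    have "real Bm * (real n + 1) = real A * (real n - 1)"
    proof -
      have "real (Bm * (n + 1)) = real (A * (n - 1))" using rel by simp
      then show ?thesis using n2 by (simp add: of_nat_diff algebra_simps)
    qed
    then show ?thesis unfolding c cB two by (simp add: algebra_simps)
  qed
qed



lemma div_lemma:
  fixes S c m b :: real
  assumes "c * m = b" "b > 0"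
  shows "S / c = m / b * S"
proof -
  have "c \<noteq> 0" "m \<noteq> 0" using assms by auto
  then show ?thesis unfolding assms(1)[symmetric] by simp
qed

theorem corollary1:
  fixes n :: nat
  shows "E n = real (n + 1) / real ((2 * n) choose n) *
    (\<Sum>k = 1..n + 1. (2 - 1 / 2 ^ multiplicity (2::nat) k) * real k *
       (real (binomz (2 * n) (int n + 1 - int k))
        - 2 * real (binomz (2 * n) (int n - int k))
        + real (binomz (2 * n) (int n - 1 - int k))))"
proof -
  define Db where "Db k = real (binomz (2 * n) (int n + 1 - int k))
        - 2 * real (binomz (2 * n) (int n - int k))
        + real (binomz (2 * n) (int n - 1 - int k))" for k
  have S: "(\<Sum>t\<in>{t. inner t = n}. real (card (branches t))) = (\<Sum>k = 1..n + 1. hh k * Db k)"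
  proof -
    have "(\<Sum>t\<in>{t. inner t = n}. real (card (branches t))) = ((Ru + Qu n) oo Uz) $ n"
      using total_sum[of n n] unfolding trees_def by simp
    also have "\<dots> = (\<Sum>j\<le>n. (Ru + Qu n) $ j * cc n j)"
      unfolding fps_compose_nth cc_def atLeast0AtMost ..
    also have "\<dots> = (\<Sum>j\<le>n. (hh (j+1) - hh (j-1)) * cc n j)"
      by (intro sum.cong refl) (simp only: H_coef atMost_iff)
    also have "\<dots> = (\<Sum>k=1..n+1. hh k * (cc n (k-1) - cc n (k+1))) + hh n * cc n (n+1) + hh (n+1) * cc n (n+2)"
      by (rule shift_sum) (rule hh_0)
    also have "\<dots> = (\<Sum>k=1..n+1. hh k * (cc n (k-1) - cc n (k+1)))"
      using cc_high[of n "n+1"] cc_high[of n "n+2"] by simp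
    also have "\<dots> = (\<Sum>k=1..n+1. hh k * Db k)"
    proof (intro sum.cong refl)
      fix k assume "k \<in> {1..n+1}"
      then have "k \<ge> 1" by simp
      then show "hh k * (cc n (k-1) - cc n (k+1)) = hh k * Db k"
        unfolding Db_def by (simp only: cc_D)
    qed
    finally show ?thesis .
  qed
  have C: "real (card {t. inner t = n}) * real (n + 1) = real ((2 * n) choose n)"
    using catalan[of n] unfolding trees_def .
  have pos: "real ((2 * n) choose n) > 0" by simp
  have "E n = (\<Sum>k = 1..n + 1. hh k * Db k) / real (card {t. inner t = n})"
    unfolding E_def S ..
  also have "\<dots> = real (n + 1) / real ((2 * n) choose n) * (\<Sum>k = 1..n + 1. hh k * Db k)"
    by (rule div_lemma[OF C pos])
  also have "(\<Sum>k = 1..n + 1. hh k * Db k) = (\<Sum>k = 1..n + 1. (2 - 1 / 2 ^ multiplicity (2::nat) k) * real k *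
       (real (binomz (2 * n) (int n + 1 - int k))
        - 2 * real (binomz (2 * n) (int n - int k))
        + real (binomz (2 * n) (int n - 1 - int k))))"
    unfolding hh_def Db_def ..
  finally show ?thesis .
qed


end
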